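(* For every tournament $T$, $\Delta(T)\le |F|$, where $F$ is a minimum feedback arc set of $T$.
   Context: A tournament is a digraph with exactly one arc between each pair of distinct vertices. A feedback arc set is a set of arcs whose removal makes the digraph acyclic. For an ordering $\sigma$ of $V(T)$, an arc $(x,y)$ is backward if $y$ precedes $x$; $d_\sigma(v)$ is the number of backward arcs incident to $v$, $\Delta_\sigma(T)=\max_v d_\sigma(v)$, and the degreewidth is $\Delta(T)=\min_\sigma\Delta_\sigma(T)$. *)

theory Defs
  imports Main
begin

definition tournament :: "'a set \<Rightarrow> ('a \<times> 'a) set \<Rightarrow> bool" where
  "tournament V A \<longleftrightarrow> finite V \<and> A \<subseteq> V \<times> V \<and>
     (\<forall>x\<in>V. (x, x) \<notin> A) \<and>
     (\<forall>x\<in>V. \<forall>y\<in>V. x \<noteq> y \<longrightarrow> ((x, y) \<in> A \<longleftrightarrow> (y, x) \<notin> A))"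

definition feedback_arc_set :: "('a \<times> 'a) set \<Rightarrow> ('a \<times> 'a) set \<Rightarrow> bool" where
  "feedback_arc_set A F \<longleftrightarrow> F \<subseteq> A \<and> acyclic (A - F)"

definition min_feedback_arc_set :: "('a \<times> 'a) set \<Rightarrow> ('a \<times> 'a) set \<Rightarrow> bool" where
  "min_feedback_arc_set A F \<longleftrightarrow> feedback_arc_set A F \<and>
     (\<forall>F'. feedback_arc_set A F' \<longrightarrow> card F \<le> card F')"

definition ordering :: "'a set \<Rightarrow> 'a list \<Rightarrow> bool" where
  "ordering V \<sigma> \<longleftrightarrow> distinct \<sigma> \<and> set \<sigma> = V"

definition backward_arcs :: "('a \<times> 'a) set \<Rightarrow> 'a list \<Rightarrow> ('a \<times> 'a) set" where
  "backward_arcs A \<sigma> = {(x, y) \<in> A. \<exists>i j. i < j \<and> j < length \<sigma> \<and>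
                                   \<sigma> ! i = y \<and> \<sigma> ! j = x}"

definition back_deg :: "('a \<times> 'a) set \<Rightarrow> 'a list \<Rightarrow> 'a \<Rightarrow> nat" where
  "back_deg A \<sigma> v = card {e \<in> backward_arcs A \<sigma>. fst e = v \<or> snd e = v}"

definition max_back_deg :: "'a set \<Rightarrow> ('a \<times> 'a) set \<Rightarrow> 'a list \<Rightarrow> nat" where
  "max_back_deg V A \<sigma> = Max (insert 0 (back_deg A \<sigma> ` V))"

definition degreewidth :: "'a set \<Rightarrow> ('a \<times> 'a) set \<Rightarrow> nat" where
  "degreewidth V A = Min {max_back_deg V A \<sigma> | \<sigma>. ordering V \<sigma>}"

end

theory Submission
  imports Defs
begin

lemma topsort:
  assumes "finite S" "acyclic R"
  shows "\<exists>\<sigma>. distinct \<sigma> \<and> set \<sigma> = S \<and>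
     (\<forall>i j. i < j \<longrightarrow> j < length \<sigma> \<longrightarrow> (\<sigma> ! j, \<sigma> ! i) \<notin> R)"
  using assms
proof (induction S rule: finite_psubset_induct)
  case (psubset S)
  show ?case
  proof (cases "S = {}")
    case True
    then show ?thesis by (intro exI[of _ "[]"]) auto
  next
    case False
    then obtain x0 where "x0 \<in> S" by blast
    let ?R = "R \<inter> (S \<times> S)"
    have fin: "finite ?R" using psubset.hyps by (intro finite_Int disjI2 finite_cartesian_product)
    have "acyclic ?R" using psubset.prems by (rule acyclic_subset) blast
    then have "wf (?R\<inverse>)" by (rule finite_acyclic_wf_converse[OF fin])
    then obtain x where x: "x \<in> S" "\<And>y. (y, x) \<in> ?R\<inverse> \<Longrightarrow> y \<notin> S"
      using wfE_min[OF _ \<open>x0 \<in> S\<close>] by blast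
    have sink: "\<And>y. y \<in> S \<Longrightarrow> (x, y) \<notin> R" using x by blast
    have "S - {x} \<subset> S" using x(1) by blast
    from psubset.IH[OF this psubset.prems] obtain \<sigma> where
      s: "distinct \<sigma>" "set \<sigma> = S - {x}"
      "\<forall>i j. i < j \<longrightarrow> j < length \<sigma> \<longrightarrow> (\<sigma> ! j, \<sigma> ! i) \<notin> R" by blast
    show ?thesis
    proof (intro exI[of _ "\<sigma> @ [x]"] conjI allI impI)
      show "distinct (\<sigma> @ [x])" using s by auto
      show "set (\<sigma> @ [x]) = S" using s(2) x(1) by auto
    next
      fix i j assume ij: "i < j" "j < length (\<sigma> @ [x])"
      show "((\<sigma> @ [x]) ! j, (\<sigma> @ [x]) ! i) \<notin> R"
      proof (cases "j < length \<sigma>")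
        case True
        then show ?thesis using s(3) ij by (simp add: nth_append)
      next
        case False
        then have "j = length \<sigma>" using ij by simp
        moreover have "\<sigma> ! i \<in> S" using s(2) ij \<open>j = length \<sigma>\<close>
          by (metis Diff_iff nth_mem)
        ultimately show ?thesis using ij sink by (simp add: nth_append)
      qed
    qed
  qed
qed

theorem mainTheorem19:
  fixes V :: "'a set" and A F :: "('a \<times> 'a) set"
  assumes "tournament V A" and "min_feedback_arc_set A F"
  shows "degreewidth V A \<le> card F"
proof -
  have finV: "finite V" and AV: "A \<subseteq> V \<times> V" using assms(1) unfolding tournament_def by auto
  have finA: "finite A" using finV AV finite_subset by blast
  have FA: "F \<subseteq> A" and ac: "acyclic (A - F)"
    using assms(2) unfolding min_feedback_arc_set_def feedback_arc_set_def by auto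
  have finF: "finite F" using FA finA finite_subset by blast
  obtain \<sigma> where s: "distinct \<sigma>" "set \<sigma> = V"
    "\<forall>i j. i < j \<longrightarrow> j < length \<sigma> \<longrightarrow> (\<sigma> ! j, \<sigma> ! i) \<notin> A - F"
    using topsort[OF finV ac] by blast
  have ord: "ordering V \<sigma>" using s unfolding ordering_def by auto
  have bF: "backward_arcs A \<sigma> \<subseteq> F"
  proof
    fix e assume "e \<in> backward_arcs A \<sigma>"
    then obtain x y i j where e: "e = (x, y)" "(x, y) \<in> A" "i < j" "j < length \<sigma>"
      "\<sigma> ! i = y" "\<sigma> ! j = x"
      unfolding backward_arcs_def by blast
    then have "(x, y) \<notin> A - F" using s(3) by metis
    then show "e \<in> F" using e by blast
  qed
  have bd: "back_deg A \<sigma> v \<le> card F" for v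
    unfolding back_deg_def by (rule card_mono[OF finF]) (use bF in blast)
  have bdA: "back_deg A \<sigma>' v \<le> card A" for \<sigma>' v
    unfolding back_deg_def backward_arcs_def by (rule card_mono[OF finA]) blast
  have m: "max_back_deg V A \<sigma> \<le> card F"
    unfolding max_back_deg_def using finV bd by auto
  have mA: "max_back_deg V A \<sigma>' \<le> card A" for \<sigma>'
    unfolding max_back_deg_def using finV bdA by auto
  have fin: "finite {max_back_deg V A \<sigma> | \<sigma>. ordering V \<sigma>}"
    by (rule finite_subset[of _ "{..card A}"]) (auto simp: mA)
  have "degreewidth V A \<le> max_back_deg V A \<sigma>"
    unfolding degreewidth_def using ord by (intro Min_le[OF fin]) auto
  then show ?thesis using m by linarith
qed

end
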